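(* Let $n\ge2$ and let $\mathbb{A}=(A_{ij})_{i,j=1}^n$ be an operator matrix as in the context. Assume that for every permutation $\pi$ of $\{1,\ldots,n\}$, $\mathbb{A}(\pi)_k$ is closed for every $k\in\{2,\ldots,n\}$. Then $\sigma(\mathbb{A})\subset\bigcap_{k=1}^nS^*_k(\mathbb{A})$.
   Context: Let $X_1,\ldots,X_n$ be complex Banach spaces and $X=X_1\times\cdots\times X_n$ with norm $\|x\|=\sum_i\|x_i\|_{X_i}$. For $i,j$, $A_{ij}:\mathcal{D}(A_{ij})\subset X_j\to X_i$ are linear, $A_{ii}$ closed, and for $i\ne j$ $A_{ij}$ is relatively $A_{jj}$-bounded ($\mathcal{D}(A_{jj})\subset\mathcal{D}(A_{ij})$ and $\|A_{ij}x\|\le\alpha\|x\|+\beta\|A_{jj}x\|$ for some $\alpha,\beta\ge0$). $\mathbb{A}=(A_{ij})$ acts on $\mathcal{D}(A_{11})\times\cdots\times\mathcal{D}(A_{nn})$ by $(\mathbb{A}x)_i=\sum_jA_{ij}x_j$. For a permutation $\pi$, $\mathbb{A}(\pi):=(A_{\pi^{-1}(i),\pi^{-1}(j)})_{i,j=1}^n$ acts on $X_{\pi^{-1}(1)}\times\cdots\times X_{\pi^{-1}(n)}$ with domain $\prod_i\mathcal{D}(A_{\pi^{-1}(i),\pi^{-1}(i)})$; $\mathbb{B}_k$ is the upper-left $k\times k$ block of such a matrix $\mathbb{B}$, with domain the product of the first $k$ diagonal domains. $\sigma(S)$ is the set of $\lambda$ for which $\lambda-S$ is not bijective from $\mathcal{D}(S)$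 with bounded inverse. For $j\ne k$ and $\lambda\notin\sigma(A_{kk})\cup\sigma(A_{jj})$ set \[ \mathcal{R}^*_{kj}(\lambda):=\sum_{i=1,i\ne k}^n\Big(\|A_{ik}(\lambda-A_{kk})^{-1}A_{kj}(\lambda-A_{jj})^{-1}\|+\|(1-\delta_{ij})A_{ij}(\lambda-A_{jj})^{-1}\|\Big), \] the modified Schur sets $S^*_{kj}(\mathbb{A}):=\sigma(A_{kk})\cup\sigma(A_{jj})\cup\{\lambda\notin\sigma(A_{kk})\cup\sigma(A_{jj}):\mathcal{R}^*_{kj}(\lambda)\ge1\}$, and $S^*_k(\mathbb{A}):=\bigcup_{j\ne k}S^*_{kj}(\mathbb{A})$. *)

theory Defs
  imports "HOL-Analysis.Analysis" "HOL-Combinatorics.Permutations" "HOL-Library.Function_Algebras"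
begin

text \<open>A complex Banach space is encoded as a real Banach space type together with a
  complex scalar multiplication extending the real one and homogeneous for the norm.\<close>
definition cbanach :: "(complex \<Rightarrow> 'a::banach \<Rightarrow> 'a) \<Rightarrow> bool" where
  "cbanach sm \<longleftrightarrow> vector_space sm \<and> (\<forall>r x. sm (complex_of_real r) x = r *\<^sub>R x)
      \<and> (\<forall>c x. norm (sm c x) = cmod c * norm x)"

definition csubspace :: "(complex \<Rightarrow> 'a::banach \<Rightarrow> 'a) \<Rightarrow> 'a set \<Rightarrow> bool" where
  "csubspace sm S \<longleftrightarrow> 0 \<in> S \<and> (\<forall>x\<in>S. \<forall>y\<in>S. x + y \<in> S) \<and> (\<forall>c. \<forall>x\<in>S. sm c x \<in> S)"

definition clinear_on :: "(complex \<Rightarrow> 'a::banach \<Rightarrow> 'a) \<Rightarrow> 'a set \<Rightarrow> ('a \<Rightarrow> 'a) \<Rightarrow> bool" where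
  "clinear_on sm D T \<longleftrightarrow> csubspace sm D \<and> (\<forall>x\<in>D. \<forall>y\<in>D. T (x + y) = T x + T y)
      \<and> (\<forall>c. \<forall>x\<in>D. T (sm c x) = sm c (T x))"

definition closed_op :: "('v::ab_group_add \<Rightarrow> real) \<Rightarrow> 'v set \<Rightarrow> 'v set \<Rightarrow> ('v \<Rightarrow> 'v) \<Rightarrow> bool" where
  "closed_op nrm E D T \<longleftrightarrow> (\<forall>xs x y. (\<forall>m. xs m \<in> D) \<and> x \<in> E \<and> y \<in> E
      \<and> ((\<lambda>m. nrm (xs m - x)) \<longlonglongrightarrow> 0) \<and> ((\<lambda>m. nrm (T (xs m) - y)) \<longlonglongrightarrow> 0)
      \<longrightarrow> x \<in> D \<and> T x = y)"

definition gspec :: "(complex \<Rightarrow> 'v::ab_group_add \<Rightarrow> 'v) \<Rightarrow> ('v \<Rightarrow> real) \<Rightarrow> 'v set \<Rightarrow> 'v set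
    \<Rightarrow> ('v \<Rightarrow> 'v) \<Rightarrow> complex set" where
  "gspec sm nrm E D T = {l. \<not> (bij_betw (\<lambda>x. sm l x - T x) D E \<and>
      (\<exists>C. \<forall>y\<in>E. nrm (inv_into D (\<lambda>x. sm l x - T x) y) \<le> C * nrm y))}"

definition resolv :: "(complex \<Rightarrow> 'v \<Rightarrow> 'v::ab_group_add) \<Rightarrow> 'v set \<Rightarrow> ('v \<Rightarrow> 'v) \<Rightarrow> complex \<Rightarrow> 'v \<Rightarrow> 'v" where
  "resolv sm D T l = inv_into D (\<lambda>x. sm l x - T x)"

definition opnorm_on :: "'a set \<Rightarrow> ('a::real_normed_vector \<Rightarrow> 'a) \<Rightarrow> real" where
  "opnorm_on S f = Sup ((\<lambda>x. norm (f x)) ` {x \<in> S. norm x \<le> 1})"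

text \<open>Product space X_{idx 1} x ... x X_{idx k} (functions on {1..k}, zero elsewhere),
  its l1-norm, and the upper-left k x k block of the matrix (A_{idx i, idx j}).\<close>
definition prodsp :: "(nat \<Rightarrow> 'a::zero set) \<Rightarrow> (nat \<Rightarrow> nat) \<Rightarrow> nat \<Rightarrow> (nat \<Rightarrow> 'a) set" where
  "prodsp Y idx k = {x. (\<forall>i\<in>{1..k}. x i \<in> Y (idx i)) \<and> (\<forall>i. i \<notin> {1..k} \<longrightarrow> x i = 0)}"

definition prodnorm :: "nat \<Rightarrow> (nat \<Rightarrow> 'a::real_normed_vector) \<Rightarrow> real" where
  "prodnorm k x = (\<Sum>i\<in>{1..k}. norm (x i))"

definition prodsm :: "(complex \<Rightarrow> 'a \<Rightarrow> 'a) \<Rightarrow> complex \<Rightarrow> (nat \<Rightarrow> 'a) \<Rightarrow> (nat \<Rightarrow> 'a)" where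
  "prodsm sm c x = (\<lambda>i. sm c (x i))"

definition blockop :: "(nat \<Rightarrow> nat \<Rightarrow> 'a \<Rightarrow> 'a::comm_monoid_add) \<Rightarrow> (nat \<Rightarrow> nat) \<Rightarrow> nat
    \<Rightarrow> (nat \<Rightarrow> 'a) \<Rightarrow> (nat \<Rightarrow> 'a)" where
  "blockop A idx k x = (\<lambda>i. if i \<in> {1..k} then (\<Sum>j\<in>{1..k}. A (idx i) (idx j) (x j)) else 0)"

definition blockdom :: "(nat \<Rightarrow> nat \<Rightarrow> 'a::zero set) \<Rightarrow> (nat \<Rightarrow> nat) \<Rightarrow> nat \<Rightarrow> (nat \<Rightarrow> 'a) set" where
  "blockdom Dom idx k = prodsp (\<lambda>i. Dom i i) idx k"

definition Rstar :: "(complex \<Rightarrow> 'a \<Rightarrow> 'a) \<Rightarrow> nat \<Rightarrow> (nat \<Rightarrow> 'a::real_normed_vector set)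
    \<Rightarrow> (nat \<Rightarrow> nat \<Rightarrow> 'a set) \<Rightarrow> (nat \<Rightarrow> nat \<Rightarrow> 'a \<Rightarrow> 'a) \<Rightarrow> nat \<Rightarrow> nat \<Rightarrow> complex \<Rightarrow> real" where
  "Rstar sm n X Dom A k j l = (\<Sum>i\<in>{1..n} - {k}.
      opnorm_on (X j) (A i k \<circ> resolv sm (Dom k k) (A k k) l \<circ> A k j \<circ> resolv sm (Dom j j) (A j j) l)
      + (if i = j then 0 else opnorm_on (X j) (A i j \<circ> resolv sm (Dom j j) (A j j) l)))"

definition Sstar2 :: "(complex \<Rightarrow> 'a \<Rightarrow> 'a) \<Rightarrow> nat \<Rightarrow> (nat \<Rightarrow> 'a::real_normed_vector set)
    \<Rightarrow> (nat \<Rightarrow> nat \<Rightarrow> 'a set) \<Rightarrow> (nat \<Rightarrow> nat \<Rightarrow> 'a \<Rightarrow> 'a) \<Rightarrow> nat \<Rightarrow> nat \<Rightarrow> complex set" where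
  "Sstar2 sm n X Dom A k j =
     (let sk = gspec sm norm (X k) (Dom k k) (A k k); sj = gspec sm norm (X j) (Dom j j) (A j j)
      in sk \<union> sj \<union> {l. l \<notin> sk \<union> sj \<and> Rstar sm n X Dom A k j l \<ge> 1})"

definition Sstar :: "(complex \<Rightarrow> 'a \<Rightarrow> 'a) \<Rightarrow> nat \<Rightarrow> (nat \<Rightarrow> 'a::real_normed_vector set)
    \<Rightarrow> (nat \<Rightarrow> nat \<Rightarrow> 'a set) \<Rightarrow> (nat \<Rightarrow> nat \<Rightarrow> 'a \<Rightarrow> 'a) \<Rightarrow> nat \<Rightarrow> complex set" where
  "Sstar sm n X Dom A k = (\<Union>j\<in>{1..n} - {k}. Sstar2 sm n X Dom A k j)"

end

theory Submission
  imports Defs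
begin

definition rsub :: "'a::real_normed_vector set \<Rightarrow> bool" where
  "rsub S \<longleftrightarrow> 0 \<in> S \<and> (\<forall>x\<in>S. \<forall>y\<in>S. x + y \<in> S) \<and> (\<forall>r. \<forall>x\<in>S. r *\<^sub>R x \<in> S)"

definition lin :: "'a::real_normed_vector set \<Rightarrow> 'a set \<Rightarrow> ('a \<Rightarrow> 'a) \<Rightarrow> bool" where
  "lin S T f \<longleftrightarrow> (\<forall>x\<in>S. f x \<in> T) \<and> (\<forall>x\<in>S. \<forall>y\<in>S. f (x + y) = f x + f y)
     \<and> (\<forall>r. \<forall>x\<in>S. f (r *\<^sub>R x) = r *\<^sub>R f x)"

definition bnd :: "'a::real_normed_vector set \<Rightarrow> ('a \<Rightarrow> 'a) \<Rightarrow> bool" where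
  "bnd S f \<longleftrightarrow> (\<exists>C. \<forall>x\<in>S. norm (f x) \<le> C * norm x)"

lemma rsub_neg: "rsub S \<Longrightarrow> x \<in> S \<Longrightarrow> - x \<in> S"
  unfolding rsub_def by (metis scaleR_minus1_left)

lemma rsub_diff: "rsub S \<Longrightarrow> x \<in> S \<Longrightarrow> y \<in> S \<Longrightarrow> x - y \<in> S"
  using rsub_neg[of S y] unfolding rsub_def by (metis diff_conv_add_uminus)

lemma rsub_sum: "rsub S \<Longrightarrow> (\<And>j. j \<in> F \<Longrightarrow> g j \<in> S) \<Longrightarrow> sum g F \<in> S"
proof (induction F rule: infinite_finite_induct)
  case (infinite A) then show ?case by (simp add: rsub_def)
next
  case empty then show ?case by (simp add: rsub_def)
next
  case (insert x F) then show ?case by (simp add: rsub_def)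
qed

lemma lin_zero: "lin S T f \<Longrightarrow> rsub S \<Longrightarrow> f 0 = 0"
  unfolding lin_def rsub_def by (metis scaleR_zero_left)

lemma lin_neg: "lin S T f \<Longrightarrow> rsub S \<Longrightarrow> x \<in> S \<Longrightarrow> f (- x) = - f x"
  unfolding lin_def by (metis scaleR_minus1_left)

lemma lin_diff: "lin S T f \<Longrightarrow> rsub S \<Longrightarrow> x \<in> S \<Longrightarrow> y \<in> S \<Longrightarrow> f (x - y) = f x - f y"
proof -
  assume a: "lin S T f" "rsub S" "x \<in> S" "y \<in> S"
  have "f (x + - y) = f x + f (- y)" using a rsub_neg[of S y] unfolding lin_def by blast
  then show ?thesis using lin_neg[OF a(1,2,4)] by simp
qed

lemma lin_sum: "lin S T f \<Longrightarrow> rsub S \<Longrightarrow> (\<And>j. j \<in> F \<Longrightarrow> g j \<in> S) \<Longrightarrow> f (sum g F) = (\<Sum>j\<in>F. f (g j))"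
proof (induction F rule: infinite_finite_induct)
  case (infinite A) then show ?case using lin_zero by simp
next
  case empty then show ?case using lin_zero by simp
next
  case (insert x F)
  have "sum g F \<in> S" using insert rsub_sum[of S F g] by blast
  then show ?case using insert unfolding lin_def by simp
qed

lemma lin_comp: "lin S T g \<Longrightarrow> lin T U f \<Longrightarrow> lin S U (\<lambda>x. f (g x))"
  unfolding lin_def by (metis)

lemma bnd_comp: "lin S T g \<Longrightarrow> bnd S g \<Longrightarrow> bnd T f \<Longrightarrow> bnd S (\<lambda>x. f (g x))"
proof -
  assume a: "lin S T g" "bnd S g" "bnd T f"
  obtain C where C: "\<forall>x\<in>S. norm (g x) \<le> C * norm x" using a(2) unfolding bnd_def by blast
  obtain D where D: "\<forall>x\<in>T. norm (f x) \<le> D * norm x" using a(3) unfolding bnd_def by blast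
  have "norm (f (g x)) \<le> (max D 0 * max C 0) * norm x" if "x \<in> S" for x
  proof -
    have gx: "g x \<in> T" using a(1) that unfolding lin_def by blast
    have "norm (f (g x)) \<le> D * norm (g x)" using D gx by blast
    also have "\<dots> \<le> max D 0 * norm (g x)" by (simp add: mult_right_mono)
    also have "\<dots> \<le> max D 0 * (C * norm x)" using C that by (simp add: mult_left_mono)
    also have "\<dots> \<le> max D 0 * (max C 0 * norm x)" by (simp add: mult_left_mono mult_right_mono)
    finally show ?thesis by simp
  qed
  then show ?thesis unfolding bnd_def by blast
qed

lemma opnorm_le:
  assumes "rsub S" "lin S T f" "bnd S f"
  shows "0 \<le> opnorm_on S f" "\<And>x. x \<in> S \<Longrightarrow> norm (f x) \<le> opnorm_on S f * norm x"
proof -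
  obtain C where C: "\<forall>x\<in>S. norm (f x) \<le> C * norm x" using assms(3) unfolding bnd_def by blast
  let ?V = "(\<lambda>x. norm (f x)) ` {x \<in> S. norm x \<le> 1}"
  have f0: "f 0 = 0" using lin_zero assms by blast
  have in0: "0 \<in> ?V" using assms(1) f0 unfolding rsub_def by force
  have bdd: "bdd_above ?V"
  proof (rule bdd_aboveI)
    fix v assume "v \<in> ?V"
    then obtain x where x: "x \<in> S" "norm x \<le> 1" "v = norm (f x)" by blast
    have "v \<le> C * norm x" using C x by blast
    also have "\<dots> \<le> max C 0" using x(2) 
      by (smt (verit) mult_left_le mult_nonneg_nonneg norm_ge_zero mult_right_mono)
    finally show "v \<le> max C 0" .
  qed
  show "0 \<le> opnorm_on S f" unfolding opnorm_on_def using cSup_upper[OF in0 bdd] .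
  fix x assume x: "x \<in> S"
  show "norm (f x) \<le> opnorm_on S f * norm x"
  proof (cases "x = 0")
    case True then show ?thesis using f0 by simp
  next
    case False
    let ?y = "(1 / norm x) *\<^sub>R x"
    have yS: "?y \<in> S" using assms(1) x unfolding rsub_def by blast
    have ny: "norm ?y = 1" using False by simp
    have "norm (f ?y) \<in> ?V" using yS ny by force
    then have le: "norm (f ?y) \<le> opnorm_on S f" unfolding opnorm_on_def using cSup_upper[OF _ bdd] by blast
    have "f ?y = (1 / norm x) *\<^sub>R f x" using assms(2) x unfolding lin_def by blast
    then have "norm (f ?y) = norm (f x) / norm x" by simp
    with le False show ?thesis by (simp add: divide_le_eq)
  qed
qed

definition l1sp :: "nat set \<Rightarrow> (nat \<Rightarrow> 'a::real_normed_vector set) \<Rightarrow> (nat \<Rightarrow> 'a) set" where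
  "l1sp J X = {u. (\<forall>j\<in>J. u j \<in> X j) \<and> (\<forall>j. j \<notin> J \<longrightarrow> u j = 0)}"

definition l1d :: "nat set \<Rightarrow> (nat \<Rightarrow> 'a::real_normed_vector) \<Rightarrow> (nat \<Rightarrow> 'a) \<Rightarrow> real" where
  "l1d J u v = (\<Sum>j\<in>J. norm (u j - v j))"

lemma l1_metric: "finite J \<Longrightarrow> Metric_space (l1sp J X) (l1d J)"
proof (unfold_locales)
  fix x y :: "nat \<Rightarrow> 'a"
  show "0 \<le> l1d J x y" unfolding l1d_def by (simp add: sum_nonneg)
  show "l1d J x y = l1d J y x" unfolding l1d_def by (simp add: norm_minus_commute)
next
  fix x y :: "nat \<Rightarrow> 'a"
  assume fin: "finite J" and xy: "x \<in> l1sp J X" "y \<in> l1sp J X"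
  show "(l1d J x y = 0) = (x = y)"
  proof
    assume "l1d J x y = 0"
    then have "\<forall>j\<in>J. norm (x j - y j) = 0" unfolding l1d_def using fin
      by (simp add: sum_nonneg_eq_0_iff)
    then show "x = y" using xy unfolding l1sp_def by (intro ext) (metis (mono_tags, lifting) eq_iff_diff_eq_0 mem_Collect_eq norm_eq_zero)
  qed (simp add: l1d_def)
next
  fix x y z :: "nat \<Rightarrow> 'a"
  show "l1d J x z \<le> l1d J x y + l1d J y z" unfolding l1d_def sum.distrib[symmetric]
  proof (rule sum_mono)
    fix j
    have "x j - z j = (x j - y j) + (y j - z j)" by simp
    then show "norm (x j - z j) \<le> norm (x j - y j) + norm (y j - z j)" by (metis norm_triangle_ineq)
  qed
qed

lemma l1_complete:
  fixes X :: "nat \<Rightarrow> 'a::banach set"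
  assumes fin: "finite J" and cl: "\<And>j. j \<in> J \<Longrightarrow> closed (X j)"
  shows "Metric_space.mcomplete (l1sp J X) (l1d J)"
proof -
  interpret Metric_space "l1sp J X" "l1d J" using l1_metric[OF fin] .
  show ?thesis unfolding mcomplete_def
  proof (intro allI impI)
    fix \<sigma> assume mc: "MCauchy \<sigma>"
    have inM: "\<And>m. \<sigma> m \<in> l1sp J X" using mc unfolding MCauchy_def by blast
    have comp: "norm (\<sigma> m j - \<sigma> p j) \<le> l1d J (\<sigma> m) (\<sigma> p)" if "j \<in> J" for m p j
      unfolding l1d_def by (rule member_le_sum[OF that]) (auto simp: fin)
    have cj: "Cauchy (\<lambda>m. \<sigma> m j)" if "j \<in> J" for j
      unfolding Cauchy_iff
    proof (intro allI impI)
      fix e :: real assume "e > 0"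
      then obtain N where N: "\<forall>m p. N \<le> m \<longrightarrow> N \<le> p \<longrightarrow> l1d J (\<sigma> m) (\<sigma> p) < e"
        using mc unfolding MCauchy_def by blast
      show "\<exists>M. \<forall>m\<ge>M. \<forall>p\<ge>M. norm (\<sigma> m j - \<sigma> p j) < e"
        using N comp[OF that] by (meson order_le_less_trans)
    qed
    define L where "L j = (if j \<in> J then lim (\<lambda>m. \<sigma> m j) else 0)" for j
    have LL: "(\<lambda>m. \<sigma> m j) \<longlonglongrightarrow> L j" if "j \<in> J" for j
      using cj[OF that] that unfolding L_def by (simp add: Cauchy_convergent_iff convergent_LIMSEQ_iff)
    have LX: "L j \<in> X j" if "j \<in> J" for j
      using closed_sequentially[OF cl[OF that] _ LL[OF that]] inM that unfolding l1sp_def by blast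
    have LM: "L \<in> l1sp J X" using LX unfolding l1sp_def L_def by auto
    have "((\<lambda>m. l1d J (\<sigma> m) L) \<longlongrightarrow> (\<Sum>j\<in>J. 0)) sequentially"
      unfolding l1d_def
    proof (rule tendsto_sum)
      fix j assume "j \<in> J"
      then show "((\<lambda>m. norm (\<sigma> m j - L j)) \<longlongrightarrow> 0) sequentially"
        using LL Lim_null tendsto_norm_zero by blast
    qed
    then have "limitin mtopology \<sigma> L sequentially"
      unfolding limitin_metric_dist_null using LM inM by simp
    then show "\<exists>x. limitin mtopology \<sigma> x sequentially" by blast
  qed
qed



locale setting =
  fixes sm :: "complex \<Rightarrow> 'a::banach \<Rightarrow> 'a"
    and n :: nat
    and X :: "nat \<Rightarrow> 'a set"
    and Dom :: "nat \<Rightarrow> nat \<Rightarrow> 'a set"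
    and A :: "nat \<Rightarrow> nat \<Rightarrow> 'a \<Rightarrow> 'a"
    and l :: complex and k :: nat
  assumes cb: "cbanach sm"
    and n2: "n \<ge> 2"
    and Xsub: "\<And>i. i \<in> {1..n} \<Longrightarrow> csubspace sm (X i) \<and> closed (X i)"
    and Dsub: "\<And>i j. i \<in> {1..n} \<Longrightarrow> j \<in> {1..n} \<Longrightarrow> Dom i j \<subseteq> X j"
    and Amap: "\<And>i j. i \<in> {1..n} \<Longrightarrow> j \<in> {1..n} \<Longrightarrow> A i j ` Dom i j \<subseteq> X i"
    and Alin: "\<And>i j. i \<in> {1..n} \<Longrightarrow> j \<in> {1..n} \<Longrightarrow> clinear_on sm (Dom i j) (A i j)"
    and Arel: "\<And>i j. i \<in> {1..n} \<Longrightarrow> j \<in> {1..n} \<Longrightarrow> i \<noteq> j \<Longrightarrow>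
        Dom j j \<subseteq> Dom i j \<and> (\<exists>\<alpha> \<beta>. \<alpha> \<ge> 0 \<and> \<beta> \<ge> 0 \<and>
          (\<forall>x\<in>Dom j j. norm (A i j x) \<le> \<alpha> * norm x + \<beta> * norm (A j j x)))"
    and kin: "k \<in> {1..n}"
    and notin: "\<And>j. j \<in> {1..n} - {k} \<Longrightarrow> l \<notin> Sstar2 sm n X Dom A k j"
begin

abbreviation "J \<equiv> {1..n} - {k}"

lemma sm_real: "sm (complex_of_real r) x = r *\<^sub>R x"
  using cb unfolding cbanach_def by blast
lemma sm_norm: "norm (sm c x) = cmod c * norm x"
  using cb unfolding cbanach_def by blast
lemma vs: "vector_space sm" using cb unfolding cbanach_def by blast
lemma sm_add: "sm c (x + y) = sm c x + sm c y"
  using vs unfolding vector_space_def by blast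
lemma sm_assoc: "sm a (sm b x) = sm (a * b) x"
  using vs unfolding vector_space_def by blast
lemma sm_zero: "sm c 0 = 0"
  using sm_norm[of c 0] by simp

lemma Xr: assumes "i \<in> {1..n}" shows "rsub (X i)"
proof -
  have cs: "csubspace sm (X i)" using Xsub[OF assms] by blast
  then show ?thesis unfolding rsub_def csubspace_def by (simp add: sm_real[symmetric])
qed

lemma Dr: assumes "i \<in> {1..n}" "j \<in> {1..n}" shows "rsub (Dom i j)"
proof -
  have cs: "csubspace sm (Dom i j)" using Alin[OF assms] unfolding clinear_on_def by blast
  then show ?thesis unfolding rsub_def csubspace_def by (simp add: sm_real[symmetric])
qed

lemma ALj: assumes "i \<in> {1..n}" "j \<in> {1..n}" shows "lin (Dom j j) (X i) (A i j)"
proof -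
  have sub: "Dom j j \<subseteq> Dom i j" using Arel[OF assms] by (cases "i = j") auto
  have cl: "clinear_on sm (Dom i j) (A i j)" using Alin[OF assms] .
  show ?thesis unfolding lin_def
  proof (intro conjI ballI allI)
    fix x assume "x \<in> Dom j j"
    then show "A i j x \<in> X i" using sub Amap[OF assms] by blast
  next
    fix x y assume "x \<in> Dom j j" "y \<in> Dom j j"
    then show "A i j (x + y) = A i j x + A i j y" using sub cl unfolding clinear_on_def by blast
  next
    fix r x assume "x \<in> Dom j j"
    then show "A i j (r *\<^sub>R x) = r *\<^sub>R A i j x" using sub cl unfolding clinear_on_def by (auto simp: sm_real[symmetric])
  qed
qed

lemma Jne: "\<exists>j. j \<in> J"
proof (cases "k = 1")
  case True then show ?thesis using n2 by (intro exI[of _ 2]) auto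
next
  case False then show ?thesis using n2 kin by (intro exI[of _ 1]) auto
qed

lemma notspec: assumes "j \<in> {1..n}" shows "l \<notin> gspec sm norm (X j) (Dom j j) (A j j)"
proof (cases "j = k")
  case True
  obtain j' where "j' \<in> J" using Jne by blast
  then show ?thesis using notin[of j'] True unfolding Sstar2_def Let_def by blast
next
  case False then show ?thesis using notin[of j] assms unfolding Sstar2_def Let_def by blast
qed

lemma Rst: "j \<in> J \<Longrightarrow> Rstar sm n X Dom A k j l < 1"
  using notin[of j] unfolding Sstar2_def Let_def by auto

definition R :: "nat \<Rightarrow> 'a \<Rightarrow> 'a" where "R j = resolv sm (Dom j j) (A j j) l"
definition B :: "nat \<Rightarrow> 'a \<Rightarrow> 'a" where "B j x = sm l x - A j j x"

lemma bij: "j \<in> {1..n} \<Longrightarrow> bij_betw (B j) (Dom j j) (X j)"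
  using notspec[of j] unfolding gspec_def B_def[abs_def] by blast

lemma R_eq: "R j = inv_into (Dom j j) (B j)"
  unfolding R_def resolv_def B_def[abs_def] by simp

lemma R_in: "j \<in> {1..n} \<Longrightarrow> y \<in> X j \<Longrightarrow> R j y \<in> Dom j j"
  using bij[of j] unfolding R_eq bij_betw_def by (simp add: inv_into_into)

lemma BR: assumes "j \<in> {1..n}" "y \<in> X j" shows "B j (R j y) = y"
  unfolding R_eq using bij_betw_inv_into_right[OF bij[OF assms(1)] assms(2)] .

lemma RB: assumes "j \<in> {1..n}" "x \<in> Dom j j" shows "R j (B j x) = x"
  unfolding R_eq using bij_betw_inv_into_left[OF bij[OF assms(1)] assms(2)] .

lemma Rbnd: "j \<in> {1..n} \<Longrightarrow> bnd (X j) (R j)"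
  using notspec[of j] unfolding gspec_def bnd_def R_def resolv_def by blast

lemma Blin: assumes "j \<in> {1..n}" shows "lin (Dom j j) (X j) (B j)"
proof -
  have L: "lin (Dom j j) (X j) (A j j)" using ALj[OF assms assms] .
  have cs: "csubspace sm (X j)" using Xsub[OF assms] by blast
  have D: "Dom j j \<subseteq> X j" using Dsub[OF assms assms] .
  show ?thesis unfolding lin_def
  proof (intro conjI ballI allI)
    fix x assume x: "x \<in> Dom j j"
    have "sm l x \<in> X j" using cs D x unfolding csubspace_def by blast
    moreover have "A j j x \<in> X j" using L x unfolding lin_def by blast
    ultimately show "B j x \<in> X j" unfolding B_def using rsub_diff[OF Xr[OF assms]] by blast
  next
    fix x y assume "x \<in> Dom j j" "y \<in> Dom j j"
    then show "B j (x + y) = B j x + B j y" using L unfolding lin_def B_def by (simp add: sm_add)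
  next
    fix r x assume x: "x \<in> Dom j j"
    have "sm l (r *\<^sub>R x) = r *\<^sub>R sm l x"
      by (simp add: sm_real[symmetric] sm_assoc mult.commute)
    then show "B j (r *\<^sub>R x) = r *\<^sub>R B j x" using L x unfolding lin_def B_def
      by (simp add: scaleR_diff_right)
  qed
qed

lemma Rlin: assumes "j \<in> {1..n}" shows "lin (X j) (Dom j j) (R j)"
proof -
  have BL: "lin (Dom j j) (X j) (B j)" using Blin[OF assms] .
  have DR: "rsub (Dom j j)" using Dr[OF assms assms] .
  show ?thesis unfolding lin_def
  proof (intro conjI ballI allI)
    fix x assume "x \<in> X j" then show "R j x \<in> Dom j j" using R_in assms by blast
  next
    fix x y assume xy: "x \<in> X j" "y \<in> X j"
    have s: "R j x + R j y \<in> Dom j j" using R_in[OF assms] xy DR unfolding rsub_def by blast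
    have "B j (R j x + R j y) = x + y" using BL R_in[OF assms] xy BR[OF assms] unfolding lin_def by simp
    then show "R j (x + y) = R j x + R j y" using RB[OF assms s] by simp
  next
    fix r x assume x: "x \<in> X j"
    have s: "r *\<^sub>R R j x \<in> Dom j j" using R_in[OF assms x] DR unfolding rsub_def by blast
    have "B j (r *\<^sub>R R j x) = r *\<^sub>R x" using BL R_in[OF assms x] BR[OF assms x] unfolding lin_def by simp
    then show "R j (r *\<^sub>R x) = r *\<^sub>R R j x" using RB[OF assms s] by simp
  qed
qed

lemma ARlin: assumes "i \<in> {1..n}" "j \<in> {1..n}" shows "lin (X j) (X i) (\<lambda>y. A i j (R j y))"
  using lin_comp[OF Rlin[OF assms(2)] ALj[OF assms]] .

lemma ARbnd: assumes "i \<in> {1..n}" "j \<in> {1..n}" "i \<noteq> j" shows "bnd (X j) (\<lambda>y. A i j (R j y))"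
proof -
  obtain \<alpha> \<beta> where ab: "\<alpha> \<ge> 0" "\<beta> \<ge> 0" "\<forall>x\<in>Dom j j. norm (A i j x) \<le> \<alpha> * norm x + \<beta> * norm (A j j x)"
    using Arel[OF assms] by blast
  obtain C where C: "\<forall>y\<in>X j. norm (R j y) \<le> C * norm y" using Rbnd[OF assms(2)] unfolding bnd_def by blast
  have "norm (A i j (R j y)) \<le> (\<alpha> * max C 0 + \<beta> * (cmod l * max C 0 + 1)) * norm y" if y: "y \<in> X j" for y
  proof -
    have Ry: "R j y \<in> Dom j j" using R_in[OF assms(2) y] .
    have nR: "norm (R j y) \<le> max C 0 * norm y"
    proof -
      have "C * norm y \<le> max C 0 * norm y" by (simp add: mult_right_mono)
      then show ?thesis using C y by (meson order_trans)
    qed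
    have e: "sm l (R j y) - A j j (R j y) = y" using BR[OF assms(2) y] unfolding B_def .
    have "A j j (R j y) = sm l (R j y) - (sm l (R j y) - A j j (R j y))" by simp
    then have "A j j (R j y) = sm l (R j y) - y" unfolding e .
    then have "norm (A j j (R j y)) \<le> cmod l * norm (R j y) + norm y"
      using norm_triangle_ineq4[of "sm l (R j y)" y] by (simp add: sm_norm)
    also have "\<dots> \<le> cmod l * (max C 0 * norm y) + norm y"
      using nR by (simp add: mult_left_mono)
    finally have nA: "norm (A j j (R j y)) \<le> (cmod l * max C 0 + 1) * norm y" by (simp add: algebra_simps)
    have "norm (A i j (R j y)) \<le> \<alpha> * norm (R j y) + \<beta> * norm (A j j (R j y))" using ab Ry by blast
    also have "\<dots> \<le> \<alpha> * (max C 0 * norm y) + \<beta> * ((cmod l * max C 0 + 1) * norm y)"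
      using nR nA ab by (intro add_mono mult_left_mono) auto
    finally show ?thesis by (simp add: algebra_simps)
  qed
  then show ?thesis unfolding bnd_def by blast
qed

end


lemma lin_add: "lin S T f \<Longrightarrow> lin S T g \<Longrightarrow> rsub T \<Longrightarrow> lin S T (\<lambda>x. f x + g x)"
  unfolding lin_def rsub_def by (simp add: algebra_simps)

lemma lin_0: "rsub T \<Longrightarrow> lin S T (\<lambda>x. 0)"
  unfolding lin_def rsub_def by simp

context setting
begin

definition "N i j y = A i j (R j y)"
definition "Q i j y = A i k (R k (A k j (R j y)))"
definition "M i j y = (if i = j then 0 else N i j y) + Q i j y"
definition "c i j = opnorm_on (X j) (Q i j) + (if i = j then 0 else opnorm_on (X j) (N i j))"

lemma Jsub: "j \<in> J \<Longrightarrow> j \<in> {1..n}" by blast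

lemma Nlin: "i \<in> {1..n} \<Longrightarrow> j \<in> {1..n} \<Longrightarrow> lin (X j) (X i) (N i j)"
  using ARlin unfolding N_def[abs_def] by blast

lemma Nbnd: "i \<in> {1..n} \<Longrightarrow> j \<in> {1..n} \<Longrightarrow> i \<noteq> j \<Longrightarrow> bnd (X j) (N i j)"
  using ARbnd unfolding N_def[abs_def] by blast

lemma Qlin: assumes "i \<in> J" "j \<in> J" shows "lin (X j) (X i) (Q i j)"
proof -
  have "lin (X j) (X i) (\<lambda>y. N i k (N k j y))"
    using lin_comp[OF Nlin Nlin] assms kin by blast
  then show ?thesis unfolding Q_def[abs_def] N_def by simp
qed

lemma Qbnd: assumes "i \<in> J" "j \<in> J" shows "bnd (X j) (Q i j)"
proof -
  have "bnd (X j) (\<lambda>y. N i k (N k j y))"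
    using bnd_comp[OF Nlin Nbnd Nbnd] assms kin by blast
  then show ?thesis unfolding Q_def[abs_def] N_def by simp
qed

lemma Mlin: assumes "i \<in> J" "j \<in> J" shows "lin (X j) (X i) (M i j)"
proof -
  have r: "rsub (X i)" using Xr assms by blast
  have "lin (X j) (X i) (\<lambda>y. (if i = j then 0 else N i j y))"
    using lin_0[OF r] Nlin[of i j] assms by (cases "i = j") auto
  then show ?thesis unfolding M_def[abs_def] using lin_add[OF _ Qlin[OF assms] r] by blast
qed

lemma c_nonneg: assumes "i \<in> J" "j \<in> J" shows "0 \<le> c i j"
  using opnorm_le(1)[OF Xr Qlin[OF assms] Qbnd[OF assms]] opnorm_le(1)[OF Xr Nlin Nbnd] assms
  unfolding c_def by auto

lemma Mbound: assumes "i \<in> J" "j \<in> J" "y \<in> X j" shows "norm (M i j y) \<le> c i j * norm y"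
proof -
  have q: "norm (Q i j y) \<le> opnorm_on (X j) (Q i j) * norm y"
    using opnorm_le(2)[OF Xr Qlin[OF assms(1,2)] Qbnd[OF assms(1,2)] assms(3)] assms by blast
  show ?thesis
  proof (cases "i = j")
    case True then show ?thesis using q unfolding M_def c_def by simp
  next
    case False
    have "norm (N i j y) \<le> opnorm_on (X j) (N i j) * norm y"
      using opnorm_le(2)[OF Xr Nlin Nbnd assms(3)] assms False by blast
    then show ?thesis using q False unfolding M_def c_def
      by (smt (verit) norm_triangle_ineq distrib_right)
  qed
qed

lemma Rstar_eq: assumes "j \<in> J" shows "Rstar sm n X Dom A k j l = (\<Sum>i\<in>J. c i j)"
  unfolding Rstar_def c_def
  by (rule sum.cong) (simp_all add: Q_def[abs_def] N_def[abs_def] R_def comp_def)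

definition "q = Max ((\<lambda>j. \<Sum>i\<in>J. c i j) ` J)"

lemma q_lt1: "q < 1"
proof -
  have "finite ((\<lambda>j. \<Sum>i\<in>J. c i j) ` J)" "((\<lambda>j. \<Sum>i\<in>J. c i j) ` J) \<noteq> {}" using Jne by auto
  then show ?thesis unfolding q_def using Rst Rstar_eq by (simp add: Max_less_iff)
qed

lemma col_le_q: "j \<in> J \<Longrightarrow> (\<Sum>i\<in>J. c i j) \<le> q"
  unfolding q_def by (rule Max_ge) auto

lemma Lest: assumes u: "\<And>j. j \<in> J \<Longrightarrow> u j \<in> X j"
  shows "(\<Sum>i\<in>J. norm (\<Sum>j\<in>J. M i j (u j))) \<le> q * (\<Sum>j\<in>J. norm (u j))"
proof -
  have "(\<Sum>i\<in>J. norm (\<Sum>j\<in>J. M i j (u j))) \<le> (\<Sum>i\<in>J. \<Sum>j\<in>J. c i j * norm (u j))"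
  proof (rule sum_mono)
    fix i assume i: "i \<in> J"
    have "norm (\<Sum>j\<in>J. M i j (u j)) \<le> (\<Sum>j\<in>J. norm (M i j (u j)))" by (rule norm_sum)
    also have "\<dots> \<le> (\<Sum>j\<in>J. c i j * norm (u j))"
      by (rule sum_mono) (use Mbound i u in blast)
    finally show "norm (\<Sum>j\<in>J. M i j (u j)) \<le> (\<Sum>j\<in>J. c i j * norm (u j))" .
  qed
  also have "\<dots> = (\<Sum>j\<in>J. (\<Sum>i\<in>J. c i j) * norm (u j))"
    by (subst sum.swap) (simp add: sum_distrib_right)
  also have "\<dots> \<le> (\<Sum>j\<in>J. q * norm (u j))"
  proof (rule sum_mono)
    fix j assume "j \<in> J"
    then show "(\<Sum>i\<in>J. c i j) * norm (u j) \<le> q * norm (u j)"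
      using col_le_q[of j] by (simp add: mult_right_mono)
  qed
  also have "\<dots> = q * (\<Sum>j\<in>J. norm (u j))" by (simp add: sum_distrib_left)
  finally show ?thesis .
qed

end


context setting
begin

lemma split_n: "sum f {1..n} = f k + sum f J"
  using sum.remove[of "{1..n}" k f] kin by simp

lemma rows:
  assumes xD: "\<And>j. j \<in> {1..n} \<Longrightarrow> x j \<in> Dom j j"
    and uX: "\<And>j. j \<in> J \<Longrightarrow> u j \<in> X j"
    and xu: "\<And>j. j \<in> J \<Longrightarrow> x j = R j (u j)"
    and yk: "yk \<in> X k"
    and xk: "x k = R k (yk + (\<Sum>j\<in>J. A k j (R j (u j))))"
  shows "sm l (x k) - (\<Sum>j\<in>{1..n}. A k j (x j)) = yk"
    and "\<And>i. i \<in> J \<Longrightarrow> sm l (x i) - (\<Sum>j\<in>{1..n}. A i j (x j)) = u i - (A i k (R k yk) + (\<Sum>j\<in>J. M i j (u j)))"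
proof -
  define v where "v = yk + (\<Sum>j\<in>J. A k j (R j (u j)))"
  have Xk: "rsub (X k)" using Xr kin by blast
  have sv: "(\<Sum>j\<in>J. A k j (R j (u j))) \<in> X k"
    by (rule rsub_sum[OF Xk]) (use ARlin[of k] kin uX in \<open>auto simp: lin_def\<close>)
  have vX: "v \<in> X k" unfolding v_def using Xk yk sv unfolding rsub_def by blast
  have sJ: "(\<Sum>j\<in>J. A i j (x j)) = (\<Sum>j\<in>J. A i j (R j (u j)))" for i
    by (rule sum.cong) (auto simp: xu)
  have sN: "(\<Sum>j\<in>{1..n}. A i j (x j)) = A i k (x k) + (\<Sum>j\<in>J. A i j (R j (u j)))" for i
    unfolding split_n sJ ..
  have BkBR: "B k (x k) = v" unfolding xk v_def[symmetric] using BR[OF kin vX] .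
  show "sm l (x k) - (\<Sum>j\<in>{1..n}. A k j (x j)) = yk"
  proof -
    have "sm l (x k) - (\<Sum>j\<in>{1..n}. A k j (x j)) = B k (x k) - (\<Sum>j\<in>J. A k j (R j (u j)))"
      unfolding sN B_def by simp
    then show ?thesis unfolding BkBR v_def by simp
  qed
  fix i assume i: "i \<in> J"
  have i1: "i \<in> {1..n}" using i by blast
  have NL: "lin (X k) (X i) (N i k)" using Nlin[OF i1 kin] .
  have elems: "A k j (R j (u j)) \<in> X k" if "j \<in> J" for j
    using ARlin[of k j] kin that uX unfolding lin_def by blast
  have "A i k (x k) = N i k v" unfolding N_def xk v_def ..
  also have "\<dots> = N i k yk + N i k (\<Sum>j\<in>J. A k j (R j (u j)))"
    unfolding v_def using NL yk sv unfolding lin_def by blast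
  also have "N i k (\<Sum>j\<in>J. A k j (R j (u j))) = (\<Sum>j\<in>J. N i k (A k j (R j (u j))))"
    by (rule lin_sum[OF NL Xk elems])
  also have "\<dots> = (\<Sum>j\<in>J. Q i j (u j))" unfolding N_def Q_def ..
  finally have Aik: "A i k (x k) = A i k (R k yk) + (\<Sum>j\<in>J. Q i j (u j))" unfolding N_def .
  have rem: "(\<Sum>j\<in>J. A i j (R j (u j))) = A i i (x i) + (\<Sum>j\<in>J - {i}. N i j (u j))"
    using i by (subst sum.remove[of J i]) (auto simp: xu N_def)
  have remM: "(\<Sum>j\<in>J. (if i = j then 0 else N i j (u j))) = (\<Sum>j\<in>J - {i}. N i j (u j))"
    using i by (subst sum.remove[of J i]) auto
  have Msum: "(\<Sum>j\<in>J. M i j (u j)) = (\<Sum>j\<in>J - {i}. N i j (u j)) + (\<Sum>j\<in>J. Q i j (u j))"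
    unfolding M_def sum.distrib remM ..
  have Bi: "sm l (x i) - A i i (x i) = u i"
    using BR[OF i1 uX[OF i]] unfolding B_def xu[OF i] .
  show "sm l (x i) - (\<Sum>j\<in>{1..n}. A i j (x j)) = u i - (A i k (R k yk) + (\<Sum>j\<in>J. M i j (u j)))"
    unfolding sN Aik rem Msum Bi[symmetric] by (simp add: algebra_simps)
qed

end


context setting
begin

definition "Y = prodsp X id n"
definition "D = blockdom Dom id n"
definition "Phi x = prodsm sm l x - blockop A id n x"
definition "Msp = l1sp J X"
definition "w y = (\<lambda>i. if i \<in> J then y i + A i k (R k (y k)) else 0)"
definition "Tm y u = (\<lambda>i. if i \<in> J then w y i + (\<Sum>j\<in>J. M i j (u j)) else 0)"
definition "solx y u = (\<lambda>j. if j \<in> J then R j (u j)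
    else if j = k then R k (y k + (\<Sum>j\<in>J. A k j (R j (u j)))) else 0)"

lemma Phi_comp: "Phi x i = (if i \<in> {1..n} then sm l (x i) - (\<Sum>j\<in>{1..n}. A i j (x j)) else sm l (x i))"
  unfolding Phi_def prodsm_def blockop_def by simp

lemma Y_iff: "y \<in> Y \<longleftrightarrow> (\<forall>i\<in>{1..n}. y i \<in> X i) \<and> (\<forall>i. i \<notin> {1..n} \<longrightarrow> y i = 0)"
  unfolding Y_def prodsp_def by simp

lemma D_iff: "x \<in> D \<longleftrightarrow> (\<forall>i\<in>{1..n}. x i \<in> Dom i i) \<and> (\<forall>i. i \<notin> {1..n} \<longrightarrow> x i = 0)"
  unfolding D_def blockdom_def prodsp_def by simp

lemma Msp_iff: "u \<in> Msp \<longleftrightarrow> (\<forall>j\<in>J. u j \<in> X j) \<and> (\<forall>j. j \<notin> J \<longrightarrow> u j = 0)"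
  unfolding Msp_def l1sp_def by simp

lemma finJ: "finite J" by simp

lemma Phi_Y: assumes "x \<in> D" shows "Phi x \<in> Y"
  unfolding Y_iff
proof (intro conjI ballI allI impI)
  fix i assume i: "i \<in> {1..n}"
  have Xi: "rsub (X i)" using Xr[OF i] .
  have xi: "x i \<in> X i" using assms Dsub[OF i i] i unfolding D_iff by blast
  have "sm l (x i) \<in> X i" using Xsub[OF i] xi unfolding csubspace_def by blast
  moreover have "(\<Sum>j\<in>{1..n}. A i j (x j)) \<in> X i"
    by (rule rsub_sum[OF Xi]) (use ALj[OF i] assms in \<open>auto simp: D_iff lin_def\<close>)
  ultimately show "Phi x i \<in> X i" unfolding Phi_comp using i rsub_diff[OF Xi] by simp
next
  fix i assume "i \<notin> {1..n}"
  then show "Phi x i = 0" using assms unfolding Phi_comp D_iff by (auto simp: sm_zero)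
qed

lemma T_MS: assumes y: "y \<in> Y" and u: "u \<in> Msp" shows "Tm y u \<in> Msp"
  unfolding Msp_iff
proof (intro conjI ballI allI impI)
  fix i assume i: "i \<in> J"
  have i1: "i \<in> {1..n}" using i by blast
  have Xi: "rsub (X i)" using Xr[OF i1] .
  have "y i \<in> X i" using y i1 unfolding Y_iff by blast
  moreover have "A i k (R k (y k)) \<in> X i"
    using ARlin[OF i1 kin] y kin unfolding Y_iff lin_def by blast
  moreover have "(\<Sum>j\<in>J. M i j (u j)) \<in> X i"
    by (rule rsub_sum[OF Xi]) (use Mlin[OF i] u in \<open>auto simp: Msp_iff lin_def\<close>)
  ultimately show "Tm y u i \<in> X i" unfolding Tm_def w_def using i Xi unfolding rsub_def by simp
next
  fix i assume ni: "i \<notin> J"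
  have e: "Tm y u i = (if i \<in> J then w y i + (\<Sum>j\<in>J. M i j (u j)) else 0)" unfolding Tm_def by (rule refl)
  show "Tm y u i = 0" unfolding e using ni by (simp only: if_False)
qed

lemma T_contr: assumes u: "u \<in> Msp" and v: "v \<in> Msp"
  shows "l1d J (Tm y u) (Tm y v) \<le> q * l1d J u v"
proof -
  have dX: "u j - v j \<in> X j" if "j \<in> J" for j
    using rsub_diff[OF Xr] u v that unfolding Msp_iff by blast
  have eq: "Tm y u i - Tm y v i = (\<Sum>j\<in>J. M i j (u j - v j))" if i: "i \<in> J" for i
  proof -
    have "Tm y u i - Tm y v i = (\<Sum>j\<in>J. M i j (u j)) - (\<Sum>j\<in>J. M i j (v j))"
      unfolding Tm_def using i by simp
    also have "\<dots> = (\<Sum>j\<in>J. M i j (u j) - M i j (v j))" by (simp add: sum_subtractf)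
    also have "\<dots> = (\<Sum>j\<in>J. M i j (u j - v j))"
      by (rule sum.cong) (use lin_diff[OF Mlin[OF i] Xr] u v in \<open>auto simp: Msp_iff\<close>)
    finally show ?thesis .
  qed
  have "l1d J (Tm y u) (Tm y v) = (\<Sum>i\<in>J. norm (\<Sum>j\<in>J. M i j (u j - v j)))"
    unfolding l1d_def by (rule sum.cong) (simp_all add: eq)
  also have "\<dots> \<le> q * (\<Sum>j\<in>J. norm (u j - v j))"
    using Lest[of "\<lambda>j. u j - v j"] dX by simp
  finally show ?thesis unfolding l1d_def .
qed

lemma Msp_metric: "Metric_space Msp (l1d J)" unfolding Msp_def by (rule l1_metric) simp

lemma Msp_complete: "Metric_space.mcomplete Msp (l1d J)"
  unfolding Msp_def by (rule l1_complete) (use Xsub in auto)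

lemma fixp: assumes y: "y \<in> Y" obtains u where "u \<in> Msp" "Tm y u = u"
proof -
  interpret MSp: Metric_space Msp "l1d J" by (rule Msp_metric)
  have "(\<lambda>_. 0) \<in> Msp" unfolding Msp_iff using Xr unfolding rsub_def by auto
  then have ne: "Msp \<noteq> {}" by blast
  show ?thesis
    by (rule MSp.Banach_fixedpoint_thm[OF Msp_complete ne _ q_lt1 T_contr]) (use T_MS y that in auto)
qed

lemma fix_unique: assumes "u \<in> Msp" "v \<in> Msp" "Tm y u = u" "Tm y v = v" "y \<in> Y" shows "u = v"
proof -
  interpret MSp: Metric_space Msp "l1d J" by (rule Msp_metric)
  show ?thesis
    by (rule MSp.contraction_imp_unique_fixpoint[OF assms(3,4) _ q_lt1 T_contr assms(1,2)])
      (use T_MS assms in auto)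
qed

end


context setting
begin

lemma vX: assumes "u \<in> Msp" "yk \<in> X k" shows "yk + (\<Sum>j\<in>J. A k j (R j (u j))) \<in> X k"
proof -
  have Xk: "rsub (X k)" using Xr kin by blast
  have sv: "(\<Sum>j\<in>J. A k j (R j (u j))) \<in> X k"
    by (rule rsub_sum[OF Xk]) (use ARlin[of k] kin assms(1) in \<open>auto simp: lin_def Msp_iff\<close>)
  then show ?thesis using Xk assms(2) unfolding rsub_def by blast
qed

lemma solx_J: "j \<in> J \<Longrightarrow> solx y u j = R j (u j)" unfolding solx_def by simp
lemma solx_k: "solx y u k = R k (y k + (\<Sum>j\<in>J. A k j (R j (u j))))" unfolding solx_def by simp
lemma solx_out: "j \<notin> {1..n} \<Longrightarrow> solx y u j = 0" unfolding solx_def using kin by auto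

lemma sol_ok: assumes y: "y \<in> Y" and u: "u \<in> Msp" and fp: "Tm y u = u"
  shows "solx y u \<in> D" "Phi (solx y u) = y"
proof -
  let ?x = "solx y u"
  have yk: "y k \<in> X k" using y kin unfolding Y_iff by blast
  have uX: "\<And>j. j \<in> J \<Longrightarrow> u j \<in> X j" using u unfolding Msp_iff by blast
  have xD: "?x j \<in> Dom j j" if j: "j \<in> {1..n}" for j
  proof (cases "j = k")
    case True then show ?thesis using R_in[OF kin vX[OF u yk]] solx_k by simp
  next
    case False then show ?thesis using R_in[OF j uX] j solx_J by simp
  qed
  show "?x \<in> D" unfolding D_iff using xD solx_out by blast
  show "Phi ?x = y"
  proof (rule ext)
    fix i
    show "Phi ?x i = y i"
    proof (cases "i \<in> {1..n}")
      case False then show ?thesis using y unfolding Phi_comp Y_iff by (auto simp: solx_out sm_zero)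
    next
      case i1: True
      have R1: "sm l (?x k) - (\<Sum>j\<in>{1..n}. A k j (?x j)) = y k"
        by (rule rows(1)) (use xD uX solx_J yk solx_k in auto)
      have R2: "\<And>i. i \<in> J \<Longrightarrow> sm l (?x i) - (\<Sum>j\<in>{1..n}. A i j (?x j)) = u i - (A i k (R k (y k)) + (\<Sum>j\<in>J. M i j (u j)))"
        by (rule rows(2)) (use xD uX solx_J yk solx_k in auto)
      show ?thesis
      proof (cases "i = k")
        case True then show ?thesis using R1 i1 unfolding Phi_comp by simp
      next
        case False
        then have i: "i \<in> J" using i1 by blast
        have "u i = Tm y u i" using fp by simp
        also have "\<dots> = y i + A i k (R k (y k)) + (\<Sum>j\<in>J. M i j (u j))"
          unfolding Tm_def w_def using i by simp
        finally have ui: "u i = y i + A i k (R k (y k)) + (\<Sum>j\<in>J. M i j (u j))" .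
        show ?thesis using R2[OF i] i1 unfolding Phi_comp by (simp add: ui)
      qed
    qed
  qed
qed

lemma sol_unique: assumes y: "y \<in> Y" and x: "x \<in> D" and Px: "Phi x = y"
    and u: "u \<in> Msp" and fp: "Tm y u = u"
  shows "x = solx y u"
proof -
  define u' where "u' j = (if j \<in> J then B j (x j) else 0)" for j
  have yk: "y k \<in> X k" using y kin unfolding Y_iff by blast
  have xD: "\<And>j. j \<in> {1..n} \<Longrightarrow> x j \<in> Dom j j" using x unfolding D_iff by blast
  have u'X: "\<And>j. j \<in> J \<Longrightarrow> u' j \<in> X j" unfolding u'_def using Blin xD unfolding lin_def by auto
  have u'M: "u' \<in> Msp" unfolding Msp_iff using u'X u'_def by auto
  have xu: "\<And>j. j \<in> J \<Longrightarrow> x j = R j (u' j)" unfolding u'_def using RB xD by auto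
  have sJ: "(\<Sum>j\<in>J. A k j (x j)) = (\<Sum>j\<in>J. A k j (R j (u' j)))"
    by (rule sum.cong) (auto simp: xu)
  have "Phi x k = y k" using Px by simp
  then have "sm l (x k) - (A k k (x k) + (\<Sum>j\<in>J. A k j (x j))) = y k"
    unfolding Phi_comp split_n using kin by simp
  then have "B k (x k) = y k + (\<Sum>j\<in>J. A k j (R j (u' j)))"
    unfolding B_def sJ by (simp add: algebra_simps)
  then have xk: "x k = R k (y k + (\<Sum>j\<in>J. A k j (R j (u' j))))"
    using RB[OF kin xD[OF kin]] by simp
  have R2: "\<And>i. i \<in> J \<Longrightarrow> sm l (x i) - (\<Sum>j\<in>{1..n}. A i j (x j)) = u' i - (A i k (R k (y k)) + (\<Sum>j\<in>J. M i j (u' j)))"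
    by (rule rows(2)) (use xD u'X xu yk xk in auto)
  have "Tm y u' = u'"
  proof (rule ext)
    fix i
    show "Tm y u' i = u' i"
    proof (cases "i \<in> J")
      case True
      have "y i = Phi x i" using Px by simp
      also have "\<dots> = u' i - (A i k (R k (y k)) + (\<Sum>j\<in>J. M i j (u' j)))"
        using R2[OF True] True unfolding Phi_comp by simp
      finally show ?thesis unfolding Tm_def w_def using True by (simp add: algebra_simps)
    next
      case False
      have e: "Tm y u' i = (if i \<in> J then w y i + (\<Sum>j\<in>J. M i j (u' j)) else 0)" unfolding Tm_def by (rule refl)
      show ?thesis unfolding e using False u'_def by (simp only: if_False)
    qed
  qed
  then have "u' = u" using fix_unique[OF u'M u _ fp y] by blast
  show "x = solx y u"
  proof (rule ext)
    fix j
    show "x j = solx y u j"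
    proof (cases "j \<in> J")
      case True then show ?thesis using xu \<open>u' = u\<close> solx_J by simp
    next
      case False
      show ?thesis
      proof (cases "j = k")
        case True then show ?thesis using xk \<open>u' = u\<close> solx_k by simp
      next
        case False
        then have "j \<notin> {1..n}" using \<open>j \<notin> J\<close> by blast
        then show ?thesis using x solx_out unfolding D_iff by simp
      qed
    qed
  qed
qed

end


context setting
begin

definition "nk i = opnorm_on (X k) (N i k)"
definition "rj j = opnorm_on (X j) (R j)"
definition "pj j = opnorm_on (X j) (N k j)"
definition "Sk = (\<Sum>i\<in>J. nk i)"
definition "rs = (\<Sum>j\<in>{1..n}. rj j)"
definition "ps = (\<Sum>j\<in>J. pj j)"
definition "U = (1 + Sk) / (1 - q)"
definition "K = rs + rs * (ps + 1) * U"

lemma nk: assumes "i \<in> J" shows "0 \<le> nk i" "\<And>z. z \<in> X k \<Longrightarrow> norm (N i k z) \<le> nk i * norm z"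
  using opnorm_le[OF Xr[OF kin] Nlin[OF _ kin] Nbnd[OF _ kin]] assms unfolding nk_def by auto

lemma rj: assumes "j \<in> {1..n}" shows "0 \<le> rj j" "\<And>z. z \<in> X j \<Longrightarrow> norm (R j z) \<le> rj j * norm z"
  using opnorm_le[OF Xr[OF assms] Rlin[OF assms] Rbnd[OF assms]] unfolding rj_def by auto

lemma pj: assumes "j \<in> J" shows "0 \<le> pj j" "\<And>z. z \<in> X j \<Longrightarrow> norm (N k j z) \<le> pj j * norm z"
  using opnorm_le[OF Xr Nlin[OF kin] Nbnd[OF kin]] assms unfolding pj_def by auto

lemma rj_le: "j \<in> {1..n} \<Longrightarrow> rj j \<le> rs"
  unfolding rs_def by (rule member_le_sum) (auto simp: rj)

lemma pj_le: "j \<in> J \<Longrightarrow> pj j \<le> ps"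
  unfolding ps_def by (rule member_le_sum) (auto simp: pj)

lemma rs_nn: "0 \<le> rs" unfolding rs_def by (rule sum_nonneg) (simp add: rj)
lemma ps_nn: "0 \<le> ps" unfolding ps_def by (rule sum_nonneg) (simp add: pj)
lemma Sk_nn: "0 \<le> Sk" unfolding Sk_def by (rule sum_nonneg) (simp add: nk)

lemma sol_bound: assumes y: "y \<in> Y" and u: "u \<in> Msp" and fp: "Tm y u = u"
  shows "prodnorm n (solx y u) \<le> K * prodnorm n y"
proof -
  define P where "P = prodnorm n y"
  define nu where "nu = (\<Sum>j\<in>J. norm (u j))"
  have uX: "\<And>j. j \<in> J \<Longrightarrow> u j \<in> X j" using u unfolding Msp_iff by blast
  have yk: "y k \<in> X k" using y kin unfolding Y_iff by blast
  have Psplit: "P = norm (y k) + (\<Sum>i\<in>J. norm (y i))" unfolding P_def prodnorm_def split_n ..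
  have sJnn: "0 \<le> (\<Sum>i\<in>J. norm (y i))" by (rule sum_nonneg) simp
  have ykP: "norm (y k) \<le> P" using Psplit sJnn by simp
  have yJP: "(\<Sum>i\<in>J. norm (y i)) \<le> P" using Psplit by simp
  have nu_nn: "0 \<le> nu" unfolding nu_def by (rule sum_nonneg) simp
  have ui: "norm (u i) \<le> norm (y i) + nk i * norm (y k) + norm (\<Sum>j\<in>J. M i j (u j))" if i: "i \<in> J" for i
  proof -
    have "u i = Tm y u i" using fp by simp
    also have "\<dots> = y i + N i k (y k) + (\<Sum>j\<in>J. M i j (u j))"
      unfolding Tm_def w_def N_def using i by simp
    finally have ueq: "u i = y i + N i k (y k) + (\<Sum>j\<in>J. M i j (u j))" .
    have "norm (u i) \<le> norm (y i) + norm (N i k (y k)) + norm (\<Sum>j\<in>J. M i j (u j))"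
      unfolding ueq by (rule order_trans[OF norm_triangle_ineq add_right_mono[OF norm_triangle_ineq]])
    then show ?thesis using nk(2)[OF i yk] by linarith
  qed
  have "nu \<le> (\<Sum>i\<in>J. norm (y i) + nk i * norm (y k) + norm (\<Sum>j\<in>J. M i j (u j)))"
    unfolding nu_def by (rule sum_mono) (rule ui)
  also have "\<dots> = (\<Sum>i\<in>J. norm (y i)) + Sk * norm (y k) + (\<Sum>i\<in>J. norm (\<Sum>j\<in>J. M i j (u j)))"
    unfolding Sk_def by (simp add: sum.distrib sum_distrib_right)
  also have "\<dots> \<le> P + Sk * P + q * nu"
    using yJP mult_left_mono[OF ykP Sk_nn] Lest[OF uX] unfolding nu_def by linarith
  finally have "(1 - q) * nu \<le> (1 + Sk) * P" by (simp add: algebra_simps)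
  then have nuU: "nu \<le> U * P" unfolding U_def using q_lt1
    by (simp add: field_simps mult.commute)
  let ?x = "solx y u"
  have xsplit: "prodnorm n ?x = norm (?x k) + (\<Sum>j\<in>J. norm (R j (u j)))"
    unfolding prodnorm_def split_n by (simp add: solx_J)
  have sR: "(\<Sum>j\<in>J. norm (R j (u j))) \<le> rs * nu"
  proof -
    have "(\<Sum>j\<in>J. norm (R j (u j))) \<le> (\<Sum>j\<in>J. rs * norm (u j))"
    proof (rule sum_mono)
      fix j assume j: "j \<in> J"
      have "norm (R j (u j)) \<le> rj j * norm (u j)" using rj(2) j uX by blast
      also have "\<dots> \<le> rs * norm (u j)" using rj_le j by (simp add: mult_right_mono)
      finally show "norm (R j (u j)) \<le> rs * norm (u j)" .
    qed
    then show ?thesis unfolding nu_def by (simp add: sum_distrib_left)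
  qed
  define v where "v = y k + (\<Sum>j\<in>J. A k j (R j (u j)))"
  have vX: "v \<in> X k" unfolding v_def using vX[OF u yk] .
  have nv: "norm v \<le> P + ps * nu"
  proof -
    have "norm v \<le> norm (y k) + (\<Sum>j\<in>J. norm (N k j (u j)))"
      unfolding v_def N_def by (rule order_trans[OF norm_triangle_ineq add_left_mono[OF norm_sum]])
    also have "(\<Sum>j\<in>J. norm (N k j (u j))) \<le> (\<Sum>j\<in>J. ps * norm (u j))"
    proof (rule sum_mono)
      fix j assume j: "j \<in> J"
      have "norm (N k j (u j)) \<le> pj j * norm (u j)" using pj(2) j uX by blast
      also have "\<dots> \<le> ps * norm (u j)" using pj_le j by (simp add: mult_right_mono)
      finally show "norm (N k j (u j)) \<le> ps * norm (u j)" .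
    qed
    finally show ?thesis using ykP unfolding nu_def by (simp add: sum_distrib_left)
  qed
  have nxk: "norm (?x k) \<le> rs * (P + ps * nu)"
  proof -
    have "norm (?x k) \<le> rj k * norm v" using rj(2)[OF kin vX] solx_k v_def by simp
    also have "\<dots> \<le> rs * norm v" using rj_le[OF kin] by (simp add: mult_right_mono)
    also have "\<dots> \<le> rs * (P + ps * nu)" using nv rs_nn by (simp add: mult_left_mono)
    finally show ?thesis .
  qed
  have "prodnorm n ?x \<le> rs * P + rs * (ps + 1) * nu"
    using xsplit sR nxk by (simp add: algebra_simps)
  also have "\<dots> \<le> rs * P + rs * (ps + 1) * (U * P)"
    using nuU rs_nn ps_nn by (simp add: mult_left_mono)
  also have "\<dots> = K * P" unfolding K_def by (simp add: algebra_simps)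
  finally show ?thesis unfolding P_def .
qed

lemma not_gspec: "l \<notin> gspec (prodsm sm) (prodnorm n) (prodsp X id n) (blockdom Dom id n) (blockop A id n)"
proof -
  have inj: "inj_on Phi D"
  proof (rule inj_onI)
    fix x1 x2 assume x: "x1 \<in> D" "x2 \<in> D" "Phi x1 = Phi x2"
    have yY: "Phi x1 \<in> Y" using Phi_Y x(1) .
    obtain u where u: "u \<in> Msp" "Tm (Phi x1) u = u" using fixp[OF yY] by blast
    show "x1 = x2" using sol_unique[OF yY x(1) refl u] sol_unique[OF yY x(2) x(3)[symmetric] u] by simp
  qed
  have img: "Phi ` D = Y"
  proof
    show "Phi ` D \<subseteq> Y" using Phi_Y by blast
    show "Y \<subseteq> Phi ` D"
    proof
      fix y assume y: "y \<in> Y"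
      obtain u where u: "u \<in> Msp" "Tm y u = u" using fixp[OF y] by blast
      show "y \<in> Phi ` D" using sol_ok[OF y u] by (metis image_eqI)
    qed
  qed
  have bij: "bij_betw Phi D Y" using inj img unfolding bij_betw_def by blast
  have bd: "\<forall>y\<in>Y. prodnorm n (inv_into D Phi y) \<le> K * prodnorm n y"
  proof
    fix y assume y: "y \<in> Y"
    obtain u where u: "u \<in> Msp" "Tm y u = u" using fixp[OF y] by blast
    have "inv_into D Phi y = solx y u"
      by (rule inv_into_f_eq[OF inj]) (use sol_ok[OF y u] in auto)
    then show "prodnorm n (inv_into D Phi y) \<le> K * prodnorm n y" using sol_bound[OF y u] by simp
  qed
  have ph: "(\<lambda>x. prodsm sm l x - blockop A id n x) = Phi" by (simp add: Phi_def fun_eq_iff)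
  have "bij_betw (\<lambda>x. prodsm sm l x - blockop A id n x) D Y \<and>
      (\<exists>C. \<forall>y\<in>Y. prodnorm n (inv_into D (\<lambda>x. prodsm sm l x - blockop A id n x) y) \<le> C * prodnorm n y)"
    unfolding ph using bij bd by blast
  then show ?thesis unfolding gspec_def Y_def D_def by blast
qed

end

theorem theorem5p2:
  fixes sm :: "complex \<Rightarrow> 'a::banach \<Rightarrow> 'a"
    and n :: nat
    and X :: "nat \<Rightarrow> 'a set"
    and Dom :: "nat \<Rightarrow> nat \<Rightarrow> 'a set"
    and A :: "nat \<Rightarrow> nat \<Rightarrow> 'a \<Rightarrow> 'a"
  assumes cb: "cbanach sm"
    and n2: "n \<ge> 2"
    and Xsub: "\<And>i. i \<in> {1..n} \<Longrightarrow> csubspace sm (X i) \<and> closed (X i)"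
    and Dsub: "\<And>i j. i \<in> {1..n} \<Longrightarrow> j \<in> {1..n} \<Longrightarrow> Dom i j \<subseteq> X j"
    and Amap: "\<And>i j. i \<in> {1..n} \<Longrightarrow> j \<in> {1..n} \<Longrightarrow> A i j ` Dom i j \<subseteq> X i"
    and Alin: "\<And>i j. i \<in> {1..n} \<Longrightarrow> j \<in> {1..n} \<Longrightarrow> clinear_on sm (Dom i j) (A i j)"
    and Aclosed: "\<And>i. i \<in> {1..n} \<Longrightarrow> closed_op norm (X i) (Dom i i) (A i i)"
    and Arel: "\<And>i j. i \<in> {1..n} \<Longrightarrow> j \<in> {1..n} \<Longrightarrow> i \<noteq> j \<Longrightarrow>
        Dom j j \<subseteq> Dom i j \<and> (\<exists>\<alpha> \<beta>. \<alpha> \<ge> 0 \<and> \<beta> \<ge> 0 \<and>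
          (\<forall>x\<in>Dom j j. norm (A i j x) \<le> \<alpha> * norm x + \<beta> * norm (A j j x)))"
    and perm_closed: "\<And>p k. p permutes {1..n} \<Longrightarrow> k \<in> {2..n} \<Longrightarrow>
        closed_op (prodnorm k) (prodsp X (inv p) k) (blockdom Dom (inv p) k) (blockop A (inv p) k)"
  shows "gspec (prodsm sm) (prodnorm n) (prodsp X id n) (blockdom Dom id n) (blockop A id n)
           \<subseteq> (\<Inter>k\<in>{1..n}. Sstar sm n X Dom A k)"
proof (intro subsetI INT_I)
  fix l k assume l: "l \<in> gspec (prodsm sm) (prodnorm n) (prodsp X id n) (blockdom Dom id n) (blockop A id n)"
    and k: "k \<in> {1..n}"
  show "l \<in> Sstar sm n X Dom A k"
  proof (rule ccontr)
    assume "l \<notin> Sstar sm n X Dom A k"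
    then have nj: "\<And>j. j \<in> {1..n} - {k} \<Longrightarrow> l \<notin> Sstar2 sm n X Dom A k j"
      unfolding Sstar_def by blast
    have "setting sm n X Dom A l k"
      by (rule setting.intro) (fact cb n2 Xsub Dsub Amap Alin Arel k nj)+
    then show False using setting.not_gspec l by blast
  qed
qed

end
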